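(* For every $\alpha>0$, $$\psi(\alpha)\;<\;\psi(2\alpha)-\ln 2\;<\;c_2(\alpha)\;<\;\psi(2\alpha),$$ where $c_2(\alpha)=2\int_0^\infty \ln(z)\,G_\alpha(z)\,g_\alpha(z)\,dz$.
   Context: $\psi=\Gamma'/\Gamma$ denotes the digamma function. For $\alpha>0$, $G_\alpha$ and $g_\alpha$ denote the distribution function and the density of the gamma distribution with shape $\alpha$ and scale $1$, i.e. $g_\alpha(z)=z^{\alpha-1}e^{-z}/\Gamma(\alpha)$, $z>0$. *)

theory Defs
  imports "HOL-Analysis.Analysis"
begin

definition gamma_dens :: "real \<Rightarrow> real \<Rightarrow> real" where
  "gamma_dens \<alpha> z = (if z > 0 then z powr (\<alpha> - 1) * exp (- z) / Gamma \<alpha> else 0)"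

definition gamma_cdf :: "real \<Rightarrow> real \<Rightarrow> real" where
  "gamma_cdf \<alpha> z = (LINT t:{..z}|lborel. gamma_dens \<alpha> t)"

definition c2 :: "real \<Rightarrow> real" where
  "c2 \<alpha> = 2 * (LINT z:{0<..}|lborel. ln z * gamma_cdf \<alpha> z * gamma_dens \<alpha> z)"

end

theory Submission
  imports Defs
begin


lemma Gamma_dup_real:
  fixes x :: real assumes "x > 0"
  shows "Gamma x * Gamma (x + 1/2) = exp ((1 - 2*x) * ln 2) * sqrt pi * Gamma (2*x)"
proof -
  have nz: "complex_of_real x \<notin> \<int>\<^sub>\<le>\<^sub>0" "complex_of_real x + 1/2 \<notin> \<int>\<^sub>\<le>\<^sub>0"
    using assms nonpos_Ints_subset_nonpos_Reals by (auto simp: complex_nonpos_Reals_iff)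
  have "complex_of_real (Gamma x * Gamma (x + 1/2)) = complex_of_real (exp ((1 - 2*x) * ln 2) * sqrt pi * Gamma (2*x))"
    using Gamma_legendre_duplication[OF nz]
    by (simp add: Gamma_complex_of_real[symmetric] exp_of_real[symmetric])
  thus ?thesis by (simp only: of_real_eq_iff)
qed

lemma Digamma_dup_real:
  fixes x :: real assumes "x > 0"
  shows "Digamma x + Digamma (x + 1/2) = 2 * Digamma (2*x) - 2 * ln 2"
proof -
  define f where "f = (\<lambda>y::real. ln_Gamma y + ln_Gamma (y + 1/2))"
  define h where "h = (\<lambda>y::real. (1 - 2*y) * ln 2 + ln (sqrt pi) + ln_Gamma (2*y))"
  have eq: "f y = h y" if "y > 0" for y
  proof -
    have "ln (Gamma y * Gamma (y + 1/2)) = ln (exp ((1 - 2*y) * ln 2) * sqrt pi * Gamma (2*y))"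
      using Gamma_dup_real[OF that] by simp
    moreover have "ln (Gamma y * Gamma (y + 1/2)) = ln (Gamma y) + ln (Gamma (y + 1/2))"
      using that by (simp add: ln_mult less_imp_neq[OF Gamma_real_pos, symmetric])
    moreover have "ln (exp ((1 - 2*y) * ln 2) * sqrt pi * Gamma (2*y)) = (1 - 2*y) * ln 2 + ln (sqrt pi) + ln (Gamma (2*y))"
      using that by (simp add: ln_mult less_imp_neq[OF Gamma_real_pos, symmetric])
    ultimately show ?thesis using that by (simp add: f_def h_def ln_Gamma_real_pos)
  qed
  have d1: "(f has_field_derivative Digamma x + Digamma (x + 1/2)) (at x)"
    unfolding f_def using assms by (auto intro!: derivative_eq_intros)
  have d2: "(h has_field_derivative (-2 * ln 2 + 2 * Digamma (2*x))) (at x)"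
    unfolding h_def using assms by (auto intro!: derivative_eq_intros)
  have d1': "(h has_field_derivative Digamma x + Digamma (x + 1/2)) (at x)"
    using d1 by (rule has_field_derivative_transform_within_open[where S="{0<..}"]) (use assms eq in auto)
  from DERIV_unique[OF d1' d2] show ?thesis by simp
qed

lemma part1:
  fixes \<alpha> :: real assumes "\<alpha> > 0"
  shows "Digamma \<alpha> < Digamma (2 * \<alpha>) - ln 2"
  using Digamma_dup_real[OF assms] Digamma_real_strict_mono[OF assms, of "\<alpha> + 1/2"] by simp



definition Gd :: "real \<Rightarrow> real \<Rightarrow> real" where
  "Gd \<gamma> t = (if t > 0 then t powr (\<gamma> - 1) * exp (- t) else 0)"

lemma Gd_measurable[measurable]: "Gd \<gamma> \<in> borel_measurable borel"
  unfolding Gd_def by measurable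

lemma Gd_nonneg: "Gd \<gamma> t \<ge> 0"
  by (simp add: Gd_def)

lemma GI:
  assumes "\<gamma> > 0"
  shows "has_bochner_integral lborel (Gd \<gamma>) (Gamma \<gamma>)"
proof -
  have eq: "ennreal (indicator {0..} t * t powr (\<gamma> - 1) / exp t) = ennreal (Gd \<gamma> t)" for t
    by (cases "t > 0"; cases "t = 0") (auto simp: Gd_def exp_minus field_simps)
  show ?thesis
    using Gamma_conv_nn_integral_real[OF assms] assms
    by (intro has_bochner_integral_nn_integral) (auto simp: eq Gd_nonneg less_imp_le)
qed

lemma GI_int: "\<gamma> > 0 \<Longrightarrow> integrable lborel (Gd \<gamma>)"
  using GI by (auto simp: has_bochner_integral_iff)

lemma GI_val: "\<gamma> > 0 \<Longrightarrow> integral\<^sup>L lborel (Gd \<gamma>) = Gamma \<gamma>"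
  using GI by (auto simp: has_bochner_integral_iff)

lemma ln_abs_bound:
  fixes t e :: real assumes "t > 0" "e > 0"
  shows "\<bar>ln t\<bar> \<le> (t powr e + t powr (-e)) / e"
proof -
  have a: "ln t = ln (t powr e) / e" using assms by (simp add: ln_powr)
  have b: "- ln t = ln (t powr (-e)) / e" using assms by (simp add: ln_powr)
  have c: "ln (t powr e) \<le> t powr e" using ln_le_minus_one[of "t powr e"] assms by simp
  have d: "ln (t powr (-e)) \<le> t powr (-e)" using ln_le_minus_one[of "t powr (-e)"] assms by simp
  have "ln t \<le> t powr e / e" using a c assms by (simp add: divide_right_mono pos_le_divide_eq mult.commute)
  also have "\<dots> \<le> (t powr e + t powr (-e)) / e" using assms by (intro divide_right_mono) auto
  finally have 1: "ln t \<le> (t powr e + t powr (-e)) / e" .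
  have "- ln t \<le> t powr (-e) / e" using b d assms by (simp add: pos_le_divide_eq mult.commute)
  also have "\<dots> \<le> (t powr e + t powr (-e)) / e" using assms by (intro divide_right_mono) auto
  finally have 2: "- ln t \<le> (t powr e + t powr (-e)) / e" .
  from 1 2 show ?thesis by linarith
qed

lemma exp_sub_one_bound:
  fixes x :: real shows "\<bar>exp x - 1\<bar> \<le> \<bar>x\<bar> * exp \<bar>x\<bar>"
proof (cases "x \<ge> 0")
  case True
  have "exp (-x) \<ge> 1 - x" using exp_ge_add_one_self[of "-x"] by simp
  hence "exp x * exp (-x) \<ge> exp x * (1 - x)" by (intro mult_left_mono) auto
  hence "1 \<ge> exp x * (1 - x)" by (simp add: exp_minus)
  thus ?thesis using True by (simp add: algebra_simps)
next
  case False
  have "exp x \<ge> 1 + x" using exp_ge_add_one_self[of x] by simp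
  moreover have "exp x \<le> 1" using False by simp
  moreover have "\<bar>x\<bar> \<le> \<bar>x\<bar> * exp \<bar>x\<bar>" by (simp add: mult_le_cancel_left1)
  ultimately show ?thesis using False by linarith
qed

lemma LI:
  assumes "\<beta> > 0"
  shows "integrable lborel (\<lambda>t. ln t * Gd \<beta> t)"
proof (rule Bochner_Integration.integrable_bound)
  define e where "e = \<beta> / 2"
  have e: "e > 0" using assms by (simp add: e_def)
  show "integrable lborel (\<lambda>t. (Gd (\<beta> + e) t + Gd (\<beta> - e) t) / e)"
    using assms e by (intro integrable_divide Bochner_Integration.integrable_add GI_int) (auto simp: e_def)
  show "(\<lambda>t. ln t * Gd \<beta> t) \<in> borel_measurable lborel" by measurable
  show "AE t in lborel. norm (ln t * Gd \<beta> t) \<le> norm ((Gd (\<beta> + e) t + Gd (\<beta> - e) t) / e)"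
  proof (intro AE_I2)
    fix t :: real
    show "norm (ln t * Gd \<beta> t) \<le> norm ((Gd (\<beta> + e) t + Gd (\<beta> - e) t) / e)"
    proof (cases "t > 0")
      case True
      have "norm (ln t * Gd \<beta> t) = \<bar>ln t\<bar> * Gd \<beta> t" by (simp add: abs_mult Gd_nonneg)
      also have "\<dots> \<le> (t powr e + t powr (-e)) / e * Gd \<beta> t"
        by (intro mult_right_mono ln_abs_bound True e Gd_nonneg)
      also have "\<dots> = (Gd (\<beta> + e) t + Gd (\<beta> - e) t) / e"
        using True by (simp add: Gd_def field_simps powr_add[symmetric])
      also have "\<dots> \<le> norm ((Gd (\<beta> + e) t + Gd (\<beta> - e) t) / e)" by (metis abs_ge_self real_norm_def)
      finally show ?thesis .
    qed (simp add: Gd_def)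
  qed
qed

lemma Gd_shift:
  assumes "t > 0" shows "Gd (\<beta> + h) t = Gd \<beta> t * exp (h * ln t)"
  using assms by (simp add: Gd_def powr_add[symmetric] powr_def exp_add[symmetric] algebra_simps)

lemma quot_bound:
  fixes t h d :: real
  assumes t: "t > 0" and d: "d > 0" and h: "\<bar>h\<bar> \<le> d" "h \<noteq> 0"
  shows "\<bar>(exp (h * ln t) - 1) / h\<bar> \<le> (t powr (2*d) + 2 + t powr (-2*d)) / d"
proof -
  let ?c = "ln t"
  have "\<bar>(exp (h * ?c) - 1) / h\<bar> = \<bar>exp (h * ?c) - 1\<bar> / \<bar>h\<bar>" by (simp add: abs_divide)
  also have "\<dots> \<le> (\<bar>h * ?c\<bar> * exp \<bar>h * ?c\<bar>) / \<bar>h\<bar>"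
    by (intro divide_right_mono exp_sub_one_bound) auto
  also have "\<dots> = \<bar>?c\<bar> * exp (\<bar>h\<bar> * \<bar>?c\<bar>)" using h by (simp add: abs_mult)
  also have "\<dots> \<le> \<bar>?c\<bar> * exp (d * \<bar>?c\<bar>)"
    using h by (intro mult_left_mono) (auto intro: mult_right_mono)
  also have "\<dots> \<le> ((t powr d + t powr (-d)) / d) * (t powr d + t powr (-d))"
  proof (intro mult_mono ln_abs_bound t d)
    show "exp (d * \<bar>?c\<bar>) \<le> t powr d + t powr - d"
    proof (cases "?c \<ge> 0")
      case True
      hence "exp (d * \<bar>?c\<bar>) = t powr d" using t by (simp add: powr_def)
      thus ?thesis by simp
    next
      case False
      hence "exp (d * \<bar>?c\<bar>) = t powr (-d)" using t by (simp add: powr_def)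
      thus ?thesis by simp
    qed
  qed (use d in auto)
  also have "\<dots> = (t powr (2*d) + 2 + t powr (-2*d)) / d"
  proof -
    have "t powr d * t powr d = t powr (2*d)" "t powr (-d) * t powr (-d) = t powr (-2*d)"
         "t powr d * t powr (-d) = 1"
      using t by (simp_all add: powr_add[symmetric])
    thus ?thesis by (simp add: field_simps power2_eq_square)
  qed
  finally show ?thesis .
qed

lemma Gamma_deriv_int:
  assumes b: "\<beta> > 0"
  shows "(\<integral>t. ln t * Gd \<beta> t \<partial>lborel) = Gamma \<beta> * Digamma \<beta>"
proof -
  define L where "L = (\<integral>t. ln t * Gd \<beta> t \<partial>lborel)"
  define d where "d = \<beta> / 4"
  have d: "d > 0" using b by (simp add: d_def)
  define w where "w = (\<lambda>t. (Gd (\<beta> + 2*d) t + 2 * Gd \<beta> t + Gd (\<beta> - 2*d) t) / d)"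
  have w_int: "integrable lborel w"
    unfolding w_def using b d
    by (intro integrable_divide Bochner_Integration.integrable_add integrable_mult_right GI_int)
       (auto simp: d_def)
  have lim_exp: "((\<lambda>h. (exp (h * c) - 1) / h) \<longlongrightarrow> c) (at 0)" for c :: real
  proof -
    have "((\<lambda>h. exp (h * c)) has_real_derivative c) (at 0)"
      by (auto intro!: derivative_eq_intros)
    thus ?thesis unfolding DERIV_def by simp
  qed
  have main: "(\<lambda>n. (Gamma (\<beta> + X n) - Gamma \<beta>) / X n) \<longlonglongrightarrow> L"
    if X0: "\<And>i. X i \<noteq> 0" and Xl: "X \<longlonglongrightarrow> 0" for X :: "nat \<Rightarrow> real"
  proof -
    have "(\<lambda>n. \<bar>X n\<bar>) \<longlonglongrightarrow> 0" using Xl by (simp add: tendsto_rabs_zero_iff)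
    from order_tendstoD(2)[OF this d] have "eventually (\<lambda>n. \<bar>X n\<bar> < d) sequentially" .
    then obtain N where N: "\<And>n. n \<ge> N \<Longrightarrow> \<bar>X n\<bar> < d" by (auto simp: eventually_sequentially)
    define Y where "Y = (\<lambda>n. X (n + N))"
    have Y0: "Y n \<noteq> 0" for n using X0 by (simp add: Y_def)
    have Yd: "\<bar>Y n\<bar> < d" for n using N by (simp add: Y_def)
    have Yl: "Y \<longlonglongrightarrow> 0" unfolding Y_def by (rule LIMSEQ_ignore_initial_segment[OF Xl])
    have Yat: "filterlim Y (at 0) sequentially"
      using Yl Y0 by (intro filterlim_atI) auto
    define s where "s = (\<lambda>n t. (Gd (\<beta> + Y n) t - Gd \<beta> t) / Y n)"
    have pos: "\<beta> + Y n > 0" for n using Yd[of n] b by (auto simp: d_def)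
    have int_s: "integral\<^sup>L lborel (s n) = (Gamma (\<beta> + Y n) - Gamma \<beta>) / Y n" for n
      unfolding s_def using pos[of n] b
      by (simp add: Bochner_Integration.integral_diff GI_int GI_val)
    have "(\<lambda>n. integral\<^sup>L lborel (s n)) \<longlonglongrightarrow> integral\<^sup>L lborel (\<lambda>t. ln t * Gd \<beta> t)"
    proof (rule integral_dominated_convergence[where w = w])
      show "(\<lambda>t. ln t * Gd \<beta> t) \<in> borel_measurable lborel" by measurable
      show "s n \<in> borel_measurable lborel" for n unfolding s_def by measurable
      show "integrable lborel w" by (rule w_int)
      show "AE t in lborel. (\<lambda>n. s n t) \<longlonglongrightarrow> ln t * Gd \<beta> t"
      proof (intro AE_I2)
        fix t :: real
        show "(\<lambda>n. s n t) \<longlonglongrightarrow> ln t * Gd \<beta> t"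
        proof (cases "t > 0")
          case True
          have "s n t = Gd \<beta> t * ((exp (Y n * ln t) - 1) / Y n)" for n
            unfolding s_def using True by (simp add: Gd_shift field_simps)
          moreover have "(\<lambda>n. Gd \<beta> t * ((exp (Y n * ln t) - 1) / Y n)) \<longlonglongrightarrow> Gd \<beta> t * ln t"
            by (intro tendsto_mult tendsto_const filterlim_compose[OF lim_exp Yat])
          ultimately show ?thesis by (simp add: mult.commute)
        next
          case False
          thus ?thesis by (simp add: s_def Gd_def)
        qed
      qed
      show "AE t in lborel. norm (s n t) \<le> w t" for n
      proof (intro AE_I2)
        fix t :: real
        show "norm (s n t) \<le> w t"
        proof (cases "t > 0")
          case True
          have "norm (s n t) = Gd \<beta> t * \<bar>(exp (Y n * ln t) - 1) / Y n\<bar>"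
          proof -
            have "s n t = Gd \<beta> t * ((exp (Y n * ln t) - 1) / Y n)"
              unfolding s_def using True by (simp add: Gd_shift field_simps)
            thus ?thesis by (simp add: abs_mult Gd_nonneg)
          qed
          also have "\<dots> \<le> Gd \<beta> t * ((t powr (2*d) + 2 + t powr (-2*d)) / d)"
            by (intro mult_left_mono quot_bound True d Gd_nonneg Y0) (use Yd[of n] in auto)
          also have "\<dots> = w t"
            unfolding w_def using True
            by (simp add: Gd_def field_simps powr_add[symmetric])
          finally show ?thesis .
        next
          case False
          thus ?thesis by (simp add: s_def w_def Gd_def)
        qed
      qed
    qed
    hence "(\<lambda>n. (Gamma (\<beta> + Y n) - Gamma \<beta>) / Y n) \<longlonglongrightarrow> L"
      by (simp add: int_s L_def)
    thus ?thesis unfolding Y_def by (rule LIMSEQ_offset)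
  qed
  have D: "(Gamma has_real_derivative L) (at \<beta>)"
    unfolding DERIV_def tendsto_at_iff_sequentially
    using main by (auto simp: comp_def)
  have D2: "(Gamma has_real_derivative Gamma \<beta> * Digamma \<beta>) (at \<beta>)"
    using b by (intro has_field_derivative_Gamma) (auto elim!: nonpos_Ints_cases)
  from DERIV_unique[OF D D2] show ?thesis by (simp add: L_def)
qed



lemma Gnz: "\<alpha> > 0 \<Longrightarrow> Gamma \<alpha> \<noteq> (0::real)"
  by (drule Gamma_real_pos) simp

lemma gd_eq: "gamma_dens \<alpha> t = Gd \<alpha> t / Gamma \<alpha>"
  by (simp add: gamma_dens_def Gd_def)

lemma gd_meas[measurable]: "gamma_dens \<alpha> \<in> borel_measurable borel"
  unfolding gamma_dens_def by measurable

lemma gd_nonneg: "\<alpha> > 0 \<Longrightarrow> gamma_dens \<alpha> t \<ge> 0"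
  by (simp add: gd_eq Gd_nonneg)

lemma gd_pos: "\<alpha> > 0 \<Longrightarrow> t > 0 \<Longrightarrow> gamma_dens \<alpha> t > 0"
  by (simp add: gamma_dens_def)

lemma gd_int: "\<alpha> > 0 \<Longrightarrow> integrable lborel (gamma_dens \<alpha>)"
  unfolding gd_eq by (intro integrable_divide GI_int)

lemma gd_total: "\<alpha> > 0 \<Longrightarrow> integral\<^sup>L lborel (gamma_dens \<alpha>) = 1"
  unfolding gd_eq by (auto simp: GI_val Gnz)

lemma gd_ln_int: "\<alpha> > 0 \<Longrightarrow> integrable lborel (\<lambda>t. ln t * gamma_dens \<alpha> t)"
proof -
  assume a: "\<alpha> > 0"
  have "(\<lambda>t. ln t * gamma_dens \<alpha> t) = (\<lambda>t. ln t * Gd \<alpha> t / Gamma \<alpha>)"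
    by (simp add: gd_eq)
  thus ?thesis using LI[OF a] by (simp add: integrable_divide)
qed

lemma gd_absln_int: "\<alpha> > 0 \<Longrightarrow> integrable lborel (\<lambda>t. \<bar>ln t\<bar> * gamma_dens \<alpha> t)"
proof -
  assume a: "\<alpha> > 0"
  have "integrable lborel (\<lambda>t. \<bar>ln t * gamma_dens \<alpha> t\<bar>)"
    using gd_ln_int[OF a] by (rule integrable_abs)
  thus ?thesis using gd_nonneg[OF a] by (simp add: abs_mult)
qed

lemma gd_ln_val: "\<alpha> > 0 \<Longrightarrow> (\<integral>t. ln t * gamma_dens \<alpha> t \<partial>lborel) = Digamma \<alpha>"
proof -
  assume a: "\<alpha> > 0"
  have "(\<integral>t. ln t * gamma_dens \<alpha> t \<partial>lborel) = (\<integral>t. ln t * Gd \<alpha> t \<partial>lborel) / Gamma \<alpha>"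
  proof -
    have "(\<lambda>t. ln t * gamma_dens \<alpha> t) = (\<lambda>t. ln t * Gd \<alpha> t / Gamma \<alpha>)"
      by (simp add: gd_eq)
    thus ?thesis by simp
  qed
  also have "\<dots> = Digamma \<alpha>" using a by (simp add: Gamma_deriv_int Gnz)
  finally show ?thesis .
qed

abbreviation "PP \<equiv> (lborel \<Otimes>\<^sub>M lborel :: (real \<times> real) measure)"

lemma prod_int:
  fixes a b :: "real \<Rightarrow> real"
  assumes a: "integrable lborel a" and b: "integrable lborel b"
  shows "integrable PP (\<lambda>(x, y). a x * b y)"
proof (rule lborel_pair.Fubini_integrable)
  note [measurable] = borel_measurable_integrable[OF a] borel_measurable_integrable[OF b]
  show "(\<lambda>(x, y). a x * b y) \<in> borel_measurable PP" by measurable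
  have "integrable lborel (\<lambda>x. \<bar>a x\<bar> * (\<integral>y. \<bar>b y\<bar> \<partial>lborel))"
    using a by (intro integrable_mult_left integrable_abs)
  thus "integrable lborel (\<lambda>x. \<integral>y. norm ((\<lambda>(x, y). a x * b y) (x, y)) \<partial>lborel)"
    by (simp add: abs_mult)
  show "AE x in lborel. integrable lborel (\<lambda>y. (\<lambda>(x, y). a x * b y) (x, y))"
    using b by auto
qed

lemma prod_integral:
  fixes a b :: "real \<Rightarrow> real"
  assumes a: "integrable lborel a" and b: "integrable lborel b"
  shows "integral\<^sup>L PP (\<lambda>(x, y). a x * b y) = integral\<^sup>L lborel a * integral\<^sup>L lborel b"
  using lborel_pair.integral_fst[OF prod_int[OF a b]] by simp

lemma shear:
  fixes f :: "real \<Rightarrow> real \<Rightarrow> real"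
  assumes int: "integrable PP (\<lambda>(x, y). f x y)"
  shows "integrable PP (\<lambda>(x, w). f x (w - x))"
    and "integral\<^sup>L PP (\<lambda>(x, w). f x (w - x)) = integral\<^sup>L PP (\<lambda>(x, y). f x y)"
proof -
  note [measurable] = borel_measurable_integrable[OF int]
  have m: "(\<lambda>(x, w). f x (w - x)) \<in> borel_measurable PP" by measurable
  have nn: "(\<integral>\<^sup>+ p. ennreal (norm ((\<lambda>(x, w). f x (w - x)) p)) \<partial>PP) =
            (\<integral>\<^sup>+ p. ennreal (norm ((\<lambda>(x, y). f x y) p)) \<partial>PP)"
  proof -
    have "(\<integral>\<^sup>+ p. ennreal (norm ((\<lambda>(x, w). f x (w - x)) p)) \<partial>PP) =
          (\<integral>\<^sup>+ x. \<integral>\<^sup>+ w. ennreal (norm (f x (w - x))) \<partial>lborel \<partial>lborel)"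
      by (subst lborel.nn_integral_fst[symmetric]) (auto intro: m)
    also have "\<dots> = (\<integral>\<^sup>+ x. \<integral>\<^sup>+ y. ennreal (norm (f x y)) \<partial>lborel \<partial>lborel)"
    proof (rule nn_integral_cong)
      fix x :: real assume "x \<in> space lborel"
      have mx: "(\<lambda>w. ennreal (norm (f x (w - x)))) \<in> borel_measurable borel" by measurable
      show "(\<integral>\<^sup>+ w. ennreal (norm (f x (w - x))) \<partial>lborel) = (\<integral>\<^sup>+ y. ennreal (norm (f x y)) \<partial>lborel)"
        using nn_integral_real_affine[OF mx, of 1 x] by simp
    qed
    also have "\<dots> = (\<integral>\<^sup>+ p. ennreal (norm ((\<lambda>(x, y). f x y) p)) \<partial>PP)"
      by (subst lborel.nn_integral_fst[symmetric]) auto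
    finally show ?thesis .
  qed
  show int2: "integrable PP (\<lambda>(x, w). f x (w - x))"
    using int m nn unfolding integrable_iff_bounded by metis
  have "integral\<^sup>L PP (\<lambda>(x, w). f x (w - x)) = (\<integral>x. \<integral>w. f x (w - x) \<partial>lborel \<partial>lborel)"
    using lborel_pair.integral_fst[OF int2] by simp
  also have "\<dots> = (\<integral>x. \<integral>y. f x y \<partial>lborel \<partial>lborel)"
  proof (rule Bochner_Integration.integral_cong[OF refl])
    fix x :: real assume "x \<in> space lborel"
    show "(\<integral>w. f x (w - x) \<partial>lborel) = (\<integral>y. f x y \<partial>lborel)"
      using lborel_integral_real_affine[of 1 "\<lambda>w. f x (w - x)" x] by simp
  qed
  also have "\<dots> = integral\<^sup>L PP (\<lambda>(x, y). f x y)"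
    using lborel_pair.integral_fst[OF int] by simp
  finally show "integral\<^sup>L PP (\<lambda>(x, w). f x (w - x)) = integral\<^sup>L PP (\<lambda>(x, y). f x y)" .
qed

lemma beta_lint:
  fixes \<alpha> :: real
  assumes a: "\<alpha> > 0"
  shows "(\<integral>u. indicator {0..1} u * (u powr (\<alpha> - 1) * (1 - u) powr (\<alpha> - 1)) \<partial>lborel) = Beta \<alpha> \<alpha>"
proof -
  have "(LINT u:{0..1}|lborel. u powr (\<alpha> - 1) * (1 - u) powr (\<alpha> - 1)) =
        integral {0..1} (\<lambda>u. u powr (\<alpha> - 1) * (1 - u) powr (\<alpha> - 1))"
    by (rule set_borel_integral_eq_integral(2)[OF integrable_Beta[OF a a]])
  also have "\<dots> = Beta \<alpha> \<alpha>"
    by (rule integral_unique[OF has_integral_Beta_real[OF a a]])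
  finally show ?thesis by (simp add: set_lebesgue_integral_def)
qed

lemma conv:
  fixes \<alpha> w :: real
  assumes a: "\<alpha> > 0"
  shows "(\<integral>x. gamma_dens \<alpha> x * gamma_dens \<alpha> (w - x) \<partial>lborel) = gamma_dens (2 * \<alpha>) w"
proof (cases "w > 0")
  case False
  have "(\<lambda>x. gamma_dens \<alpha> x * gamma_dens \<alpha> (w - x)) = (\<lambda>x. 0)"
    using False by (auto simp add: gamma_dens_def)
  thus ?thesis using False by (simp add: gamma_dens_def)
next
  case True
  define C where "C = w powr (2 * \<alpha> - 2) * exp (- w) / (Gamma \<alpha> * Gamma \<alpha>)"
  have pw: "gamma_dens \<alpha> (w * u) * gamma_dens \<alpha> (w - w * u) =
            C * (indicator {0..1} u * (u powr (\<alpha> - 1) * (1 - u) powr (\<alpha> - 1)))" for u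
  proof -
    consider "u < 0" | "u = 0" | "0 < u \<and> u < 1" | "u = 1" | "u > 1" by linarith
    thus ?thesis
    proof cases
      case 1
      have "w * u < 0" using 1 True by (simp add: mult_pos_neg)
      thus ?thesis using 1 by (simp add: gamma_dens_def)
    next
      case 2 thus ?thesis using True by (simp add: gamma_dens_def)
    next
      case 4 thus ?thesis using True by (simp add: gamma_dens_def)
    next
      case 5
      have "w - w * u < 0" using 5 True by (simp add: algebra_simps)
      thus ?thesis using 5 True by (simp add: gamma_dens_def)
    next
      case 3
      have p1: "w * u > 0" using 3 True by simp
      have p2: "w - w * u > 0" using 3 True by (simp add: algebra_simps)
      have e1: "(w * u) powr (\<alpha> - 1) = w powr (\<alpha> - 1) * u powr (\<alpha> - 1)"
        using 3 True by (simp add: powr_mult)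
      have e2: "(w - w * u) powr (\<alpha> - 1) = w powr (\<alpha> - 1) * (1 - u) powr (\<alpha> - 1)"
      proof -
        have "w - w * u = w * (1 - u)" by (simp add: algebra_simps)
        thus ?thesis using 3 True by (simp add: powr_mult)
      qed
      have e3: "w powr (\<alpha> - 1) * w powr (\<alpha> - 1) = w powr (2 * \<alpha> - 2)"
        using True by (simp add: powr_add[symmetric])
      have e4: "exp (- (w * u)) * exp (- (w - w * u)) = exp (- w)"
        by (simp add: exp_add[symmetric])
      have "gamma_dens \<alpha> (w * u) * gamma_dens \<alpha> (w - w * u) =
            ((w * u) powr (\<alpha> - 1) * exp (- (w * u)) / Gamma \<alpha>) *
            ((w - w * u) powr (\<alpha> - 1) * exp (- (w - w * u)) / Gamma \<alpha>)"
        using p1 p2 by (simp add: gamma_dens_def)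
      also have "\<dots> = (w powr (\<alpha> - 1) * w powr (\<alpha> - 1)) * (exp (- (w * u)) * exp (- (w - w * u)))
                     * (u powr (\<alpha> - 1) * (1 - u) powr (\<alpha> - 1)) / (Gamma \<alpha> * Gamma \<alpha>)"
        unfolding e1 e2 by (simp add: field_simps)
      also have "\<dots> = C * (indicator {0..1} u * (u powr (\<alpha> - 1) * (1 - u) powr (\<alpha> - 1)))"
        unfolding e3 e4 C_def using 3 by (simp add: indicator_def field_simps)
      finally show ?thesis by simp
    qed
  qed
  have "(\<integral>x. gamma_dens \<alpha> x * gamma_dens \<alpha> (w - x) \<partial>lborel) =
        \<bar>w\<bar> *\<^sub>R (\<integral>u. gamma_dens \<alpha> (0 + w * u) * gamma_dens \<alpha> (w - (0 + w * u)) \<partial>lborel)"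
    using True by (intro lborel_integral_real_affine) simp
  also have "\<dots> = w * (C * Beta \<alpha> \<alpha>)"
    using True by (simp add: pw beta_lint[OF a])
  also have "\<dots> = gamma_dens (2 * \<alpha>) w"
  proof -
    have "w * w powr (2 * \<alpha> - 2) = w powr (2 * \<alpha> - 1)"
    proof -
      have "w powr (1 + (2 * \<alpha> - 2)) = w powr 1 * w powr (2 * \<alpha> - 2)"
        by (rule powr_add)
      moreover have "1 + (2 * \<alpha> - 2) = 2 * \<alpha> - 1" by simp
      ultimately have "w powr (2 * \<alpha> - 1) = w powr 1 * w powr (2 * \<alpha> - 2)" by simp
      thus ?thesis using True by simp
    qed
    moreover have "Beta \<alpha> \<alpha> = Gamma \<alpha> * Gamma \<alpha> / Gamma (2 * \<alpha>)"
    proof -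
      have "Beta \<alpha> \<alpha> = Gamma \<alpha> * Gamma \<alpha> / Gamma (\<alpha> + \<alpha>)" by (rule Beta_def)
      moreover have "\<alpha> + \<alpha> = 2 * \<alpha>" by simp
      ultimately show ?thesis by metis
    qed
    moreover have alg: "\<And>A E g1 g2 :: real. g1 \<noteq> 0 \<Longrightarrow> w * (A * E / (g1 * g1) * (g1 * g1 / g2)) = (w * A) * E / g2"
      by (simp add: field_simps)
    ultimately show ?thesis using True Gnz[OF a]
      unfolding C_def gamma_dens_def by (simp only: alg if_True) (metis alg)
  qed
  finally show ?thesis .
qed



lemma dom_int:
  fixes h :: "real \<Rightarrow> real \<Rightarrow> real" and \<alpha> :: real
  assumes a: "\<alpha> > 0"
    and m: "(\<lambda>(x, y). h x y) \<in> borel_measurable PP"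
    and b: "\<And>x y. x > 0 \<Longrightarrow> y > 0 \<Longrightarrow> \<bar>h x y\<bar> \<le> \<bar>ln x\<bar> + \<bar>ln y\<bar> + 1"
  shows "integrable PP (\<lambda>(x, y). h x y * (gamma_dens \<alpha> x * gamma_dens \<alpha> y))"
proof (rule Bochner_Integration.integrable_bound)
  let ?g = "gamma_dens \<alpha>"
  have i1: "integrable PP (\<lambda>(x, y). (\<bar>ln x\<bar> * ?g x) * ?g y)"
    by (intro prod_int gd_absln_int gd_int a)
  have i2: "integrable PP (\<lambda>(x, y). ?g x * (\<bar>ln y\<bar> * ?g y))"
    by (intro prod_int gd_absln_int gd_int a)
  have i3: "integrable PP (\<lambda>(x, y). ?g x * ?g y)"
    by (intro prod_int gd_int a)
  have "integrable PP (\<lambda>p. (\<lambda>(x, y). (\<bar>ln x\<bar> * ?g x) * ?g y) p + (\<lambda>(x, y). ?g x * (\<bar>ln y\<bar> * ?g y)) p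
                       + (\<lambda>(x, y). ?g x * ?g y) p)"
    by (intro Bochner_Integration.integrable_add i1 i2 i3)
  moreover have "(\<lambda>p. (\<lambda>(x, y). (\<bar>ln x\<bar> * ?g x) * ?g y) p + (\<lambda>(x, y). ?g x * (\<bar>ln y\<bar> * ?g y)) p
                       + (\<lambda>(x, y). ?g x * ?g y) p) =
                 (\<lambda>(x, y). (\<bar>ln x\<bar> + \<bar>ln y\<bar> + 1) * (?g x * ?g y))"
    by (auto simp: fun_eq_iff algebra_simps)
  ultimately show "integrable PP (\<lambda>(x, y). (\<bar>ln x\<bar> + \<bar>ln y\<bar> + 1) * (?g x * ?g y))" by simp
  show "(\<lambda>(x, y). h x y * (?g x * ?g y)) \<in> borel_measurable PP"
    using m by measurable
  show "AE p in PP. norm ((\<lambda>(x, y). h x y * (?g x * ?g y)) p)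
          \<le> norm ((\<lambda>(x, y). (\<bar>ln x\<bar> + \<bar>ln y\<bar> + 1) * (?g x * ?g y)) p)"
  proof (intro AE_I2)
    fix p :: "real \<times> real"
    obtain x y where p: "p = (x, y)" by (cases p)
    show "norm ((\<lambda>(x, y). h x y * (?g x * ?g y)) p)
          \<le> norm ((\<lambda>(x, y). (\<bar>ln x\<bar> + \<bar>ln y\<bar> + 1) * (?g x * ?g y)) p)"
    proof (cases "x > 0 \<and> y > 0")
      case True
      have "\<bar>h x y\<bar> * (?g x * ?g y) \<le> (\<bar>ln x\<bar> + \<bar>ln y\<bar> + 1) * (?g x * ?g y)"
        using True b[of x y] gd_nonneg[OF a] by (intro mult_right_mono) auto
      thus ?thesis using p gd_nonneg[OF a, of x] gd_nonneg[OF a, of y]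
        by (simp add: abs_mult)
    next
      case False
      hence "?g x * ?g y = 0" by (auto simp: gamma_dens_def)
      thus ?thesis using p by auto
    qed
  qed
qed

lemma ln_sum_bound:
  fixes x y :: real assumes "x > 0" "y > 0"
  shows "\<bar>ln (x + y)\<bar> \<le> \<bar>ln x\<bar> + \<bar>ln y\<bar> + 1"
proof -
  have "ln x \<le> ln (x + y)" using assms by simp
  moreover have "ln (x + y) \<le> ln (2 * max x y)" using assms by (simp add: max_def)
  moreover have "ln (2 * max x y) = ln 2 + ln (max x y)" using assms by (simp add: ln_mult)
  moreover have "ln (max x y) \<le> \<bar>ln x\<bar> + \<bar>ln y\<bar>" by (simp add: max_def, arith)
  moreover have "ln 2 < (1::real)" by (rule ln_2_less_1)
  ultimately show ?thesis by linarith
qed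

definition "F1 \<alpha> = (\<lambda>(x, y). ln (max x y) * (gamma_dens \<alpha> x * gamma_dens \<alpha> y))"
definition "F2 \<alpha> = (\<lambda>(x, y). ln (x + y) * (gamma_dens \<alpha> x * gamma_dens \<alpha> y))"
definition "KK \<alpha> = (\<lambda>(x, y). 1 * (gamma_dens \<alpha> x * gamma_dens \<alpha> y))"

lemma F1_int: "\<alpha> > 0 \<Longrightarrow> integrable PP (F1 \<alpha>)"
  unfolding F1_def by (rule dom_int) (auto simp: max_def)

lemma F2_int: "\<alpha> > 0 \<Longrightarrow> integrable PP (F2 \<alpha>)"
  unfolding F2_def by (rule dom_int) (auto intro: ln_sum_bound)

lemma KK_int: "\<alpha> > 0 \<Longrightarrow> integrable PP (KK \<alpha>)"
  unfolding KK_def by (rule dom_int) auto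

lemma KK_val: "\<alpha> > 0 \<Longrightarrow> integral\<^sup>L PP (KK \<alpha>) = 1"
  unfolding KK_def using prod_integral[OF gd_int gd_int, of \<alpha> \<alpha>] by (simp add: gd_total)

lemma F2_val:
  fixes \<alpha> :: real assumes a: "\<alpha> > 0"
  shows "integral\<^sup>L PP (F2 \<alpha>) = Digamma (2 * \<alpha>)"
proof -
  let ?g = "gamma_dens \<alpha>"
  define f where "f = (\<lambda>x y. ln (x + y) * (?g x * ?g y))"
  have fi: "integrable PP (\<lambda>(x, y). f x y)"
    using F2_int[OF a] by (simp add: F2_def f_def)
  have "integral\<^sup>L PP (F2 \<alpha>) = integral\<^sup>L PP (\<lambda>(x, y). f x y)"
    by (simp add: F2_def f_def)
  also have "\<dots> = integral\<^sup>L PP (\<lambda>(x, w). f x (w - x))"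
    by (rule shear(2)[OF fi, symmetric])
  also have "\<dots> = (\<integral>w. \<integral>x. f x (w - x) \<partial>lborel \<partial>lborel)"
    by (rule lborel_pair.integral_snd[OF shear(1)[OF fi], symmetric])
  also have "\<dots> = (\<integral>w. ln w * gamma_dens (2 * \<alpha>) w \<partial>lborel)"
  proof (rule Bochner_Integration.integral_cong[OF refl])
    fix w :: real assume "w \<in> space lborel"
    have "(\<integral>x. f x (w - x) \<partial>lborel) = (\<integral>x. ln w * (?g x * ?g (w - x)) \<partial>lborel)"
      by (simp add: f_def)
    also have "\<dots> = ln w * gamma_dens (2 * \<alpha>) w"
      by (simp add: conv[OF a])
    finally show "(\<integral>x. f x (w - x) \<partial>lborel) = ln w * gamma_dens (2 * \<alpha>) w" .
  qed
  also have "\<dots> = Digamma (2 * \<alpha>)"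
    using a by (intro gd_ln_val) simp
  finally show ?thesis .
qed

lemma diag_AE: "AE p in PP. fst p \<noteq> snd p"
proof (rule lborel_pair.AE_pair_measure)
  show "{x \<in> space PP. fst x \<noteq> snd x} \<in> sets PP" by measurable
  show "AE x in lborel. AE y in lborel. fst (x, y) \<noteq> snd (x, y)"
    using AE_lborel_singleton by (auto simp: eq_commute)
qed

lemma c2_eq:
  fixes \<alpha> :: real assumes a: "\<alpha> > 0"
  shows "c2 \<alpha> = integral\<^sup>L PP (F1 \<alpha>)"
proof -
  let ?g = "gamma_dens \<alpha>"
  define H where "H = (\<lambda>(x, y). (if y \<le> x then ln x else 0) * (?g x * ?g y))"
  define H2 where "H2 = (\<lambda>(x, y). (if y < x then ln x else 0) * (?g x * ?g y))"
  define H3 where "H3 = (\<lambda>(x, y). (if x < y then ln y else 0) * (?g x * ?g y))"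
  have Hi: "integrable PP H" unfolding H_def by (rule dom_int[OF a]) auto
  have H2i: "integrable PP H2" unfolding H2_def by (rule dom_int[OF a]) auto
  have H3i: "integrable PP H3" unfolding H3_def by (rule dom_int[OF a]) auto
  have "(\<integral>z. indicator {0<..} z *\<^sub>R (ln z * gamma_cdf \<alpha> z * ?g z) \<partial>lborel) =
        (\<integral>z. \<integral>t. H (z, t) \<partial>lborel \<partial>lborel)"
  proof (rule Bochner_Integration.integral_cong[OF refl])
    fix z :: real assume "z \<in> space lborel"
    have "indicator {0<..} z *\<^sub>R (ln z * gamma_cdf \<alpha> z * ?g z) = (ln z * ?g z) * gamma_cdf \<alpha> z"
      by (simp add: gamma_dens_def indicator_def)
    also have "\<dots> = (ln z * ?g z) * (\<integral>t. (if t \<le> z then ?g t else 0) \<partial>lborel)"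
      unfolding gamma_cdf_def set_lebesgue_integral_def
      by (intro arg_cong[where f="\<lambda>u. _ * u"] Bochner_Integration.integral_cong) (auto simp: indicator_def)
    also have "\<dots> = (\<integral>t. H (z, t) \<partial>lborel)"
    proof -
      have "(ln z * ?g z) * (\<integral>t. (if t \<le> z then ?g t else 0) \<partial>lborel) =
            (\<integral>t. (ln z * ?g z) * (if t \<le> z then ?g t else 0) \<partial>lborel)"
        by (rule integral_mult_right_zero[symmetric])
      also have "\<dots> = (\<integral>t. H (z, t) \<partial>lborel)"
        by (rule Bochner_Integration.integral_cong) (auto simp: H_def)
      finally show ?thesis .
    qed
    finally show "indicator {0<..} z *\<^sub>R (ln z * gamma_cdf \<alpha> z * ?g z) = (\<integral>t. H (z, t) \<partial>lborel)" .
  qed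
  also have "\<dots> = integral\<^sup>L PP H"
    using lborel_pair.integral_fst[of "\<lambda>z t. H (z, t)"] Hi by simp
  finally have c2H: "c2 \<alpha> = 2 * integral\<^sup>L PP H"
    by (simp add: c2_def set_lebesgue_integral_def)
  have HH2: "integral\<^sup>L PP H = integral\<^sup>L PP H2"
  proof (rule integral_cong_AE)
    show "H \<in> borel_measurable PP" using Hi by auto
    show "H2 \<in> borel_measurable PP" using H2i by auto
    show "AE p in PP. H p = H2 p"
      using diag_AE by eventually_elim (auto simp: H_def H2_def)
  qed
  have H2H3: "integral\<^sup>L PP H3 = integral\<^sup>L PP H2"
  proof -
    have "integral\<^sup>L PP H3 = (\<integral>(x, y). H2 (y, x) \<partial>PP)"
      by (intro Bochner_Integration.integral_cong) (auto simp: H2_def H3_def)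
    also have "\<dots> = integral\<^sup>L PP H2"
      using H2i by (intro lborel_pair.integral_product_swap) auto
    finally show ?thesis .
  qed
  have "F1 \<alpha> = (\<lambda>p. H p + H3 p)"
    by (auto simp: fun_eq_iff F1_def H_def H3_def max_def)
  hence "integral\<^sup>L PP (F1 \<alpha>) = integral\<^sup>L PP H + integral\<^sup>L PP H3"
    using Hi H3i by simp
  thus ?thesis using c2H HH2 H2H3 by simp
qed

lemma pos_int:
  fixes D :: "real \<times> real \<Rightarrow> real"
  assumes i: "integrable PP D" and nn: "\<And>p. D p \<ge> 0"
    and pos: "\<And>x y. 1 < x \<Longrightarrow> x < 2 \<Longrightarrow> 3 < y \<Longrightarrow> y < 4 \<Longrightarrow> D (x, y) > 0"
  shows "integral\<^sup>L PP D > 0"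
proof -
  define A where "A = {1::real<..<2} \<times> {3::real<..<4}"
  have As: "A \<in> sets PP" unfolding A_def by measurable
  have "emeasure PP A = emeasure lborel {1::real<..<2} * emeasure lborel {3::real<..<4}"
    unfolding A_def by (rule lborel.emeasure_pair_measure_Times) auto
  hence Am: "emeasure PP A = 1" by simp
  have ge: "integral\<^sup>L PP D \<ge> 0" using nn by (intro integral_nonneg_AE) auto
  have "integral\<^sup>L PP D \<noteq> 0"
  proof
    assume "integral\<^sup>L PP D = 0"
    hence "AE p in PP. D p = 0" using integral_nonneg_eq_0_iff_AE[OF i] nn by auto
    hence "AE p in PP. p \<notin> A"
      by eventually_elim (force simp: A_def dest: pos)
    hence "emeasure PP A = 0"
      using AE_iff_measurable[OF As, where P="\<lambda>p. p \<notin> A"] by (auto simp: space_pair_measure)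
    thus False using Am by simp
  qed
  thus ?thesis using ge by simp
qed

lemma main23:
  fixes \<alpha> :: real assumes a: "\<alpha> > 0"
  shows "Digamma (2 * \<alpha>) - ln 2 < c2 \<alpha> \<and> c2 \<alpha> < Digamma (2 * \<alpha>)"
proof
  let ?g = "gamma_dens \<alpha>"
  have c1: "integral\<^sup>L PP (\<lambda>p. F2 \<alpha> p - F1 \<alpha> p) > 0"
  proof (rule pos_int)
    show "integrable PP (\<lambda>p. F2 \<alpha> p - F1 \<alpha> p)" using F1_int[OF a] F2_int[OF a] by simp
    fix p :: "real \<times> real"
    obtain x y where p: "p = (x, y)" by (cases p)
    show "F2 \<alpha> p - F1 \<alpha> p \<ge> 0"
    proof (cases "x > 0 \<and> y > 0")
      case True
      have "ln (max x y) \<le> ln (x + y)" using True by (simp add: max_def)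
      hence "ln (max x y) * (?g x * ?g y) \<le> ln (x + y) * (?g x * ?g y)"
        using gd_nonneg[OF a, of x] gd_nonneg[OF a, of y] by (intro mult_right_mono) auto
      thus ?thesis by (simp add: p F1_def F2_def)
    next
      case False
      hence "?g x * ?g y = 0" by (auto simp: gamma_dens_def)
      thus ?thesis by (auto simp: p F1_def F2_def)
    qed
  next
    fix x y :: real assume xy: "1 < x" "x < 2" "3 < y" "y < 4"
    have "ln (max x y) < ln (x + y)" using xy by (simp add: max_def)
    moreover have "?g x * ?g y > 0" using xy gd_pos[OF a] by simp
    ultimately have "ln (max x y) * (?g x * ?g y) < ln (x + y) * (?g x * ?g y)"
      by (rule mult_strict_right_mono)
    thus "F2 \<alpha> (x, y) - F1 \<alpha> (x, y) > 0"
      by (simp add: F1_def F2_def)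
  qed
  have c2': "integral\<^sup>L PP (\<lambda>p. F1 \<alpha> p - F2 \<alpha> p + ln 2 * KK \<alpha> p) > 0"
  proof (rule pos_int)
    show "integrable PP (\<lambda>p. F1 \<alpha> p - F2 \<alpha> p + ln 2 * KK \<alpha> p)"
      using F1_int[OF a] F2_int[OF a] KK_int[OF a] by simp
    fix p :: "real \<times> real"
    obtain x y where p: "p = (x, y)" by (cases p)
    show "F1 \<alpha> p - F2 \<alpha> p + ln 2 * KK \<alpha> p \<ge> 0"
    proof (cases "x > 0 \<and> y > 0")
      case True
      have "ln (x + y) \<le> ln (2 * max x y)" using True by (simp add: max_def)
      also have "\<dots> = ln 2 + ln (max x y)" using True by (simp add: ln_mult max_def)
      finally have "0 \<le> ln (max x y) - ln (x + y) + ln 2" by simp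
      hence "0 \<le> (ln (max x y) - ln (x + y) + ln 2) * (?g x * ?g y)"
        using gd_nonneg[OF a, of x] gd_nonneg[OF a, of y] by simp
      thus ?thesis by (simp add: p F1_def F2_def KK_def algebra_simps)
    next
      case False
      hence "?g x * ?g y = 0" by (auto simp: gamma_dens_def)
      thus ?thesis by (auto simp: p F1_def F2_def KK_def)
    qed
  next
    fix x y :: real assume xy: "1 < x" "x < 2" "3 < y" "y < 4"
    have "ln (x + y) < ln (2 * y)" using xy by simp
    also have "\<dots> = ln 2 + ln (max x y)" using xy by (simp add: ln_mult max_def)
    finally have "0 < ln (max x y) - ln (x + y) + ln 2" by simp
    moreover have "?g x * ?g y > 0" using xy gd_pos[OF a] by simp
    ultimately have "0 < (ln (max x y) - ln (x + y) + ln 2) * (?g x * ?g y)" by simp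
    thus "F1 \<alpha> (x, y) - F2 \<alpha> (x, y) + ln 2 * KK \<alpha> (x, y) > 0"
      by (simp add: F1_def F2_def KK_def algebra_simps)
  qed
  have e1: "integral\<^sup>L PP (\<lambda>p. F2 \<alpha> p - F1 \<alpha> p) = integral\<^sup>L PP (F2 \<alpha>) - integral\<^sup>L PP (F1 \<alpha>)"
    using F1_int[OF a] F2_int[OF a] by simp
  have e2: "integral\<^sup>L PP (\<lambda>p. F1 \<alpha> p - F2 \<alpha> p + ln 2 * KK \<alpha> p) =
            integral\<^sup>L PP (F1 \<alpha>) - integral\<^sup>L PP (F2 \<alpha>) + ln 2 * integral\<^sup>L PP (KK \<alpha>)"
    using F1_int[OF a] F2_int[OF a] KK_int[OF a] by simp
  show "Digamma (2 * \<alpha>) - ln 2 < c2 \<alpha>"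
    using c2' e2 KK_val[OF a] F2_val[OF a] c2_eq[OF a] by simp
  show "c2 \<alpha> < Digamma (2 * \<alpha>)"
    using c1 e1 F2_val[OF a] c2_eq[OF a] by simp
qed


theorem lemma2p1:
  fixes \<alpha> :: real
  assumes "\<alpha> > 0"
  shows "Digamma \<alpha> < Digamma (2 * \<alpha>) - ln 2
       \<and> Digamma (2 * \<alpha>) - ln 2 < c2 \<alpha>
       \<and> c2 \<alpha> < Digamma (2 * \<alpha>)"
  using part1[OF assms] main23[OF assms] by blast

end
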